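(* Let $F:\mathbb{R}\to[0,1]$ be an arbitrary distribution function, let $\alpha\in(0,1)$, and put $\xi=F^{\wedge}(\alpha)$ and $\beta=\Delta F(\xi)$. Let $X,V$ be real random variables on a probability space $(\Omega,\mathcal{F},\mathbb{P})$ such that $V\sim U(0,1)$ and $V$ is independent of $X$. Define $F_V(X)(\omega)=F_{V(\omega)}(X(\omega))$ on $\{V\in(0,1]\}$. Then \[\mathbb{P}\big(F_V(X)\le\alpha\big)-\alpha=\mathbb{P}\big(X>\xi\text{ and }F(X)=\alpha\big)+c_\beta\big(\mathbb{P}(X=\xi)-\beta\big)+\big(\mathbb{P}(X\le\xi)-F(\xi)\big),\] where $c_\beta=0$ if $\beta=0$ and $c_\beta=\frac{\alpha-F(\xi)}{\beta}$ if $\beta\neq0$.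
   Context: A distribution function is a non-decreasing, right-continuous $F:\mathbb{R}\to[0,1]$ with limits $0$ at $-\infty$ and $1$ at $+\infty$ ($F$ need not be the distribution function of $X$). $F(x-)=\lim_{z\uparrow x}F(z)$, $\Delta F(x)=F(x)-F(x-)$, $F_\lambda(x)=F(x-)+\lambda\Delta F(x)$ for $\lambda\in[0,1]$, and $F^{\wedge}(\alpha)=\inf\{x:F(x)\ge\alpha\}$. The event $\{F_V(X)\le\alpha\}$ is understood as $\{V\in(0,1],\ F_V(X)\le\alpha\}$ (a set of full probability complement is irrelevant since $\mathbb{P}(V\in(0,1])=1$). *)

theory Defs
  imports "HOL-Probability.Probability"
begin

definition is_distfun :: "(real \<Rightarrow> real) \<Rightarrow> bool" where
  "is_distfun F \<longleftrightarrow> mono F \<and> (\<forall>x. 0 \<le> F x \<and> F x \<le> 1) \<and>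
     (\<forall>x. continuous (at_right x) F) \<and> (F \<longlongrightarrow> 0) at_bot \<and> (F \<longlongrightarrow> 1) at_top"

definition left_lim :: "(real \<Rightarrow> real) \<Rightarrow> real \<Rightarrow> real" where
  "left_lim F x = Lim (at_left x) F"

definition jump :: "(real \<Rightarrow> real) \<Rightarrow> real \<Rightarrow> real" where
  "jump F x = F x - left_lim F x"

definition Flam :: "(real \<Rightarrow> real) \<Rightarrow> real \<Rightarrow> real \<Rightarrow> real" where
  "Flam F lam x = left_lim F x + lam * jump F x"

definition geninv :: "(real \<Rightarrow> real) \<Rightarrow> real \<Rightarrow> real" where
  "geninv F a = Inf {x. a \<le> F x}"

end

theory Submission
  imports Defs
begin

lemma ll_tendsto:
  fixes F :: "real \<Rightarrow> real"
  assumes "mono F" "\<And>x. 0 \<le> F x \<and> F x \<le> 1"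
  shows "(F \<longlongrightarrow> Sup (F ` {..<x})) (at_left x)"
proof (rule order_tendstoI)
  have bdd: "bdd_above (F ` {..<x})" using assms(2) by (auto intro: bdd_aboveI[of _ 1])
  have ne: "F ` {..<x} \<noteq> {}" by auto
  fix a assume "a < Sup (F ` {..<x})"
  then obtain y where y: "y < x" "a < F y" using less_cSup_iff[OF ne bdd] by auto
  have "eventually (\<lambda>z. z \<in> {y<..<x}) (at_left x)" using eventually_at_left_real[OF y(1)] .
  then show "eventually (\<lambda>z. a < F z) (at_left x)"
    by eventually_elim (use y assms(1) in \<open>force intro: less_le_trans[OF _ monoD[OF assms(1)]]\<close>)
next
  have bdd: "bdd_above (F ` {..<x})" using assms(2) by (auto intro: bdd_aboveI[of _ 1])
  fix a assume a: "Sup (F ` {..<x}) < a"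
  have "eventually (\<lambda>z. z \<in> {x - 1<..<x}) (at_left x)" by (rule eventually_at_left_real) simp
  then show "eventually (\<lambda>z. F z < a) (at_left x)"
  proof eventually_elim
    case (elim z) then have "F z \<le> Sup (F ` {..<x})" by (intro cSup_upper[OF _ bdd]) auto
    then show ?case using a by simp
  qed
qed

lemma ll_eq:
  fixes F :: "real \<Rightarrow> real"
  assumes "mono F" "\<And>x. 0 \<le> F x \<and> F x \<le> 1"
  shows "left_lim F x = Sup (F ` {..<x})"
  unfolding left_lim_def using ll_tendsto[OF assms] by (intro tendsto_Lim) (simp_all add: trivial_limit_at_left_real)

lemma ll_props:
  fixes F :: "real \<Rightarrow> real"
  assumes "mono F" "\<And>x. 0 \<le> F x \<and> F x \<le> 1"
  shows "y < x \<Longrightarrow> F y \<le> left_lim F x" and "left_lim F x \<le> F x"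
    and "(\<And>y. y < x \<Longrightarrow> F y \<le> c) \<Longrightarrow> left_lim F x \<le> c"
proof -
  have bdd: "bdd_above (F ` {..<x})" using assms(2) by (auto intro: bdd_aboveI[of _ 1])
  have ne: "F ` {..<x} \<noteq> {}" by auto
  show "y < x \<Longrightarrow> F y \<le> left_lim F x" unfolding ll_eq[OF assms] by (intro cSup_upper[OF _ bdd]) auto
  show "left_lim F x \<le> F x" unfolding ll_eq[OF assms] by (intro cSup_least[OF ne]) (auto intro: monoD[OF assms(1)])
  show "(\<And>y. y < x \<Longrightarrow> F y \<le> c) \<Longrightarrow> left_lim F x \<le> c" unfolding ll_eq[OF assms] by (intro cSup_least[OF ne]) auto
qed

lemma xi_props:
  fixes F :: "real \<Rightarrow> real"
  assumes "is_distfun F" "0 < \<alpha>" "\<alpha> < 1"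
  shows "\<And>x. x < geninv F \<alpha> \<Longrightarrow> F x < \<alpha>" and "\<alpha> \<le> F (geninv F \<alpha>)"
proof -
  have mono: "mono F" and rc: "\<And>x. (F \<longlongrightarrow> F x) (at_right x)"
    and top: "(F \<longlongrightarrow> 1) at_top" and bot: "(F \<longlongrightarrow> 0) at_bot"
    using assms(1) unfolding is_distfun_def by (auto simp: continuous_within)
  define S where "S = {x. \<alpha> \<le> F x}"
  have "eventually (\<lambda>x. \<alpha> < F x) at_top" using order_tendstoD(1)[OF top assms(3)] .
  then obtain t where "\<alpha> < F t" by (auto simp: eventually_at_top_linorder)
  then have ne: "S \<noteq> {}" unfolding S_def by (auto intro!: exI[of _ t])
  have "eventually (\<lambda>x. F x < \<alpha>) at_bot" using order_tendstoD(2)[OF bot assms(2)] .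
  then obtain b where b: "\<And>x. x \<le> b \<Longrightarrow> F x < \<alpha>" by (auto simp: eventually_at_bot_linorder)
  have bdd: "bdd_below S" unfolding S_def
    by (rule bdd_belowI[of _ b]) (use b in \<open>fastforce intro: less_imp_le simp: not_less[symmetric]\<close>)
  have xi: "geninv F \<alpha> = Inf S" unfolding geninv_def S_def by simp
  show lt: "\<And>x. x < geninv F \<alpha> \<Longrightarrow> F x < \<alpha>"
  proof (rule ccontr)
    fix x assume "x < geninv F \<alpha>" "\<not> F x < \<alpha>"
    then have "x \<in> S" by (auto simp: S_def)
    then have "Inf S \<le> x" by (rule cInf_lower[OF _ bdd])
    then show False using \<open>x < geninv F \<alpha>\<close> xi by simp
  qed
  have ev: "eventually (\<lambda>z. \<alpha> \<le> F z) (at_right (geninv F \<alpha>))"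
  proof -
    have "eventually (\<lambda>z. z \<in> {geninv F \<alpha><..<geninv F \<alpha> + 1}) (at_right (geninv F \<alpha>))"
      by (rule eventually_at_right_real) simp
    then show ?thesis
    proof eventually_elim
      case (elim z)
      then have "Inf S < z" using xi by simp
      then obtain s where "s \<in> S" "s < z" using cInf_less_iff[OF ne bdd] by auto
      then show ?case unfolding S_def using monoD[OF mono, of s z] by auto
    qed
  qed
  show "\<alpha> \<le> F (geninv F \<alpha>)"
    by (rule tendsto_lowerbound[OF rc ev]) (simp add: trivial_limit_at_right_real)
qed

lemma pointwise:
  fixes F :: "real \<Rightarrow> real"
  assumes "is_distfun F" "0 < \<alpha>" "\<alpha> < 1" "0 < v" "v \<le> 1"
  defines "\<xi> \<equiv> geninv F \<alpha>"
  defines "t \<equiv> (if jump F \<xi> = 0 then 1 else (\<alpha> - left_lim F \<xi>) / jump F \<xi>)"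
  shows "Flam F v x \<le> \<alpha> \<longleftrightarrow> x < \<xi> \<or> (\<xi> < x \<and> F x = \<alpha>) \<or> (x = \<xi> \<and> v \<le> t)"
proof -
  have mono: "mono F" and b01: "\<And>x. 0 \<le> F x \<and> F x \<le> 1"
    using assms(1) unfolding is_distfun_def by auto
  note ll = ll_props[OF mono b01]
  note xp = xi_props[OF assms(1-3), folded \<xi>_def]
  have jnn: "\<And>y. 0 \<le> jump F y" using ll(2) by (simp add: jump_def)
  consider "x < \<xi>" | "\<xi> < x" | "x = \<xi>" by linarith
  then show ?thesis
  proof cases
    case 1
    have "Flam F v x \<le> left_lim F x + 1 * jump F x" unfolding Flam_def
      using jnn[of x] assms(5) by (intro add_left_mono mult_right_mono) auto
    also have "\<dots> = F x" by (simp add: jump_def)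
    finally show ?thesis using xp(1)[OF 1] 1 by simp
  next
    case 2
    have ge: "\<alpha> \<le> left_lim F x" using ll(1)[OF 2] xp(2) by simp
    have "Flam F v x \<le> \<alpha> \<longleftrightarrow> left_lim F x = \<alpha> \<and> v * jump F x = 0"
      unfolding Flam_def using ge mult_nonneg_nonneg[of v "jump F x"] jnn[of x] assms(4)
      by (smt (verit) mult_eq_0_iff mult_pos_pos)
    also have "\<dots> \<longleftrightarrow> F x = \<alpha>" using assms(4) ge ll(2)[of x] by (auto simp: jump_def)
    finally show ?thesis using 2 by simp
  next
    case 3
    have le: "left_lim F \<xi> \<le> \<alpha>" by (rule ll(3)) (use xp(1) in \<open>auto intro: less_imp_le\<close>)
    show ?thesis
    proof (cases "jump F \<xi> = 0")
      case True
      then show ?thesis using 3 le xp(2) assms(5) by (auto simp: Flam_def t_def jump_def)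
    next
      case False
      then have jp: "0 < jump F \<xi>" using jnn[of \<xi>] by simp
      have "Flam F v x \<le> \<alpha> \<longleftrightarrow> v * jump F \<xi> \<le> \<alpha> - left_lim F \<xi>" using 3 by (auto simp: Flam_def)
      also have "\<dots> \<longleftrightarrow> v \<le> t" using jp False by (simp add: t_def pos_le_divide_eq)
      finally show ?thesis using 3 by simp
    qed
  qed
qed

lemma unif_prob:
  assumes "prob_space M" "V \<in> borel_measurable M"
    and "distr M lborel V = uniform_measure lborel {0..1::real}" and "0 \<le> s" "s \<le> 1"
  shows "measure M {\<omega> \<in> space M. V \<omega> \<in> {0<..s}} = s"
proof -
  have "measure M {\<omega> \<in> space M. V \<omega> \<in> {0<..s}} = measure (distr M lborel V) {0<..s}"
    using assms(2) by (subst measure_distr) (auto intro!: arg_cong[where f="measure M"])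
  also have "\<dots> = measure lborel ({0..1} \<inter> {0<..s}) / measure lborel {0..1::real}"
    unfolding assms(3) by (subst measure_uniform_measure) auto
  also have "{0..1} \<inter> {0<..s} = {0<..s}" using assms(5) by auto
  finally show ?thesis using assms(4) by simp
qed

theorem mainTheorem7:
  fixes M :: "'a measure" and F :: "real \<Rightarrow> real" and X V :: "'a \<Rightarrow> real" and \<alpha> :: real
  assumes "prob_space M"
    and "is_distfun F"
    and "0 < \<alpha>" and "\<alpha> < 1"
    and "X \<in> borel_measurable M" and "V \<in> borel_measurable M"
    and "distr M lborel V = uniform_measure lborel {0..1}"
    and "prob_space.indep_var M borel X borel V"
  shows "let \<xi> = geninv F \<alpha>; \<beta> = jump F \<xi>;
             c = (if \<beta> = 0 then 0 else (\<alpha> - F \<xi>) / \<beta>) in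
         measure M {\<omega> \<in> space M. 0 < V \<omega> \<and> V \<omega> \<le> 1 \<and> Flam F (V \<omega>) (X \<omega>) \<le> \<alpha>} - \<alpha>
         = measure M {\<omega> \<in> space M. X \<omega> > \<xi> \<and> F (X \<omega>) = \<alpha>}
           + c * (measure M {\<omega> \<in> space M. X \<omega> = \<xi>} - \<beta>)
           + (measure M {\<omega> \<in> space M. X \<omega> \<le> \<xi>} - F \<xi>)"
proof -
  interpret prob_space M by fact
  define \<xi> where "\<xi> = geninv F \<alpha>"
  define \<beta> where "\<beta> = jump F \<xi>"
  define c where "c = (if \<beta> = 0 then 0 else (\<alpha> - F \<xi>) / \<beta>)"
  define t where "t = (if jump F \<xi> = 0 then 1 else (\<alpha> - left_lim F \<xi>) / jump F \<xi>)"
  have mono: "mono F" and b01: "\<And>x. 0 \<le> F x \<and> F x \<le> 1"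
    using assms(2) unfolding is_distfun_def by auto
  note ll = ll_props[OF mono b01]
  note xp = xi_props[OF assms(2-4), folded \<xi>_def]
  have le: "left_lim F \<xi> \<le> \<alpha>" by (rule ll(3)) (use xp(1) in \<open>auto intro: less_imp_le\<close>)
  have bnn: "0 \<le> \<beta>" using ll(2)[of \<xi>] by (simp add: \<beta>_def jump_def)
  have t01: "0 \<le> t" "t \<le> 1"
    using le xp(2) bnn by (auto simp: t_def \<beta>_def[symmetric] jump_def divide_le_eq_1)
  have [measurable]: "F \<in> borel_measurable borel" using borel_measurable_mono[OF mono] .
  note [measurable] = assms(5,6)
  have ind: "indep_var borel X borel V" using assms(8) .
  have E: "{\<omega> \<in> space M. 0 < V \<omega> \<and> V \<omega> \<le> 1 \<and> Flam F (V \<omega>) (X \<omega>) \<le> \<alpha>}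
     = ({\<omega> \<in> space M. X \<omega> \<in> {..<\<xi>} \<and> V \<omega> \<in> {0<..1}} \<union>
        {\<omega> \<in> space M. X \<omega> \<in> {x. \<xi> < x \<and> F x = \<alpha>} \<and> V \<omega> \<in> {0<..1}}) \<union>
        {\<omega> \<in> space M. X \<omega> \<in> {\<xi>} \<and> V \<omega> \<in> {0<..t}}"
  proof (intro set_eqI iffI)
    fix \<omega> assume "\<omega> \<in> {\<omega> \<in> space M. 0 < V \<omega> \<and> V \<omega> \<le> 1 \<and> Flam F (V \<omega>) (X \<omega>) \<le> \<alpha>}"
    then have h: "\<omega> \<in> space M" "0 < V \<omega>" "V \<omega> \<le> 1" "Flam F (V \<omega>) (X \<omega>) \<le> \<alpha>" by auto
    have "X \<omega> < \<xi> \<or> (\<xi> < X \<omega> \<and> F (X \<omega>) = \<alpha>) \<or> (X \<omega> = \<xi> \<and> V \<omega> \<le> t)"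
      using pointwise[OF assms(2-4) h(2,3), of "X \<omega>"] h(4) unfolding t_def \<xi>_def by blast
    then show "\<omega> \<in> ({\<omega> \<in> space M. X \<omega> \<in> {..<\<xi>} \<and> V \<omega> \<in> {0<..1}} \<union>
        {\<omega> \<in> space M. X \<omega> \<in> {x. \<xi> < x \<and> F x = \<alpha>} \<and> V \<omega> \<in> {0<..1}}) \<union>
        {\<omega> \<in> space M. X \<omega> \<in> {\<xi>} \<and> V \<omega> \<in> {0<..t}}" using h by auto
  next
    fix \<omega> assume "\<omega> \<in> ({\<omega> \<in> space M. X \<omega> \<in> {..<\<xi>} \<and> V \<omega> \<in> {0<..1}} \<union>
        {\<omega> \<in> space M. X \<omega> \<in> {x. \<xi> < x \<and> F x = \<alpha>} \<and> V \<omega> \<in> {0<..1}}) \<union>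
        {\<omega> \<in> space M. X \<omega> \<in> {\<xi>} \<and> V \<omega> \<in> {0<..t}}"
    then have h: "\<omega> \<in> space M" "0 < V \<omega>" "V \<omega> \<le> 1"
      and d: "X \<omega> < \<xi> \<or> (\<xi> < X \<omega> \<and> F (X \<omega>) = \<alpha>) \<or> (X \<omega> = \<xi> \<and> V \<omega> \<le> t)"
      using t01 by auto
    have "Flam F (V \<omega>) (X \<omega>) \<le> \<alpha>"
      using pointwise[OF assms(2-4) h(2,3), of "X \<omega>"] d unfolding t_def \<xi>_def by blast
    then show "\<omega> \<in> {\<omega> \<in> space M. 0 < V \<omega> \<and> V \<omega> \<le> 1 \<and> Flam F (V \<omega>) (X \<omega>) \<le> \<alpha>}" using h by auto
  qed
  have Bset: "{x. \<xi> < x \<and> F x = \<alpha>} \<in> sets borel" by measurable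
  have "measure M {\<omega> \<in> space M. 0 < V \<omega> \<and> V \<omega> \<le> 1 \<and> Flam F (V \<omega>) (X \<omega>) \<le> \<alpha>}
      = \<P>(\<omega> in M. X \<omega> \<in> {..<\<xi>} \<and> V \<omega> \<in> {0<..1})
        + \<P>(\<omega> in M. X \<omega> \<in> {x. \<xi> < x \<and> F x = \<alpha>} \<and> V \<omega> \<in> {0<..1})
        + \<P>(\<omega> in M. X \<omega> \<in> {\<xi>} \<and> V \<omega> \<in> {0<..t})"
    unfolding E
    apply (subst finite_measure_Union)
       apply (measurable; fail)
      apply (measurable; fail)
     apply force
    apply (subst finite_measure_Union)
       apply (measurable; fail)
      apply (measurable; fail)
     apply force
    apply simp
    done
  also have "\<dots> = \<P>(\<omega> in M. X \<omega> < \<xi>) + \<P>(\<omega> in M. \<xi> < X \<omega> \<and> F (X \<omega>) = \<alpha>)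
        + \<P>(\<omega> in M. X \<omega> = \<xi>) * t"
    using unif_prob[OF assms(1,6,7)] t01
      prob_indep_random_variable[OF ind, of "{..<\<xi>}" "{0<..1}"]
      prob_indep_random_variable[OF ind, OF Bset, of "{0<..1}"]
      prob_indep_random_variable[OF ind, of "{\<xi>}" "{0<..t}"]
    by simp
  finally have L: "measure M {\<omega> \<in> space M. 0 < V \<omega> \<and> V \<omega> \<le> 1 \<and> Flam F (V \<omega>) (X \<omega>) \<le> \<alpha>}
      = \<P>(\<omega> in M. X \<omega> < \<xi>) + \<P>(\<omega> in M. \<xi> < X \<omega> \<and> F (X \<omega>) = \<alpha>)
        + \<P>(\<omega> in M. X \<omega> = \<xi>) * t" .
  have le2: "\<P>(\<omega> in M. X \<omega> \<le> \<xi>) = \<P>(\<omega> in M. X \<omega> < \<xi>) + \<P>(\<omega> in M. X \<omega> = \<xi>)"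
  proof -
    have "{\<omega> \<in> space M. X \<omega> \<le> \<xi>} = {\<omega> \<in> space M. X \<omega> < \<xi>} \<union> {\<omega> \<in> space M. X \<omega> = \<xi>}" by auto
    then show ?thesis by (simp only:) (subst finite_measure_Union, auto)
  qed
  have key: "\<P>(\<omega> in M. X \<omega> = \<xi>) * t = c * (\<P>(\<omega> in M. X \<omega> = \<xi>) - \<beta>) + \<P>(\<omega> in M. X \<omega> = \<xi>) - F \<xi> + \<alpha>"
  proof (cases "\<beta> = 0")
    case True
    then have "F \<xi> = \<alpha>" using le xp(2) by (simp add: \<beta>_def jump_def)
    then show ?thesis using True by (simp add: c_def t_def \<beta>_def[symmetric])
  next
    case False
    have "left_lim F \<xi> = F \<xi> - \<beta>" by (simp add: \<beta>_def jump_def)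
    then show ?thesis using False by (simp add: c_def t_def \<beta>_def[symmetric] field_simps)
        (simp add: distrib_right[symmetric])
  qed
  show ?thesis unfolding Let_def \<xi>_def[symmetric] \<beta>_def[symmetric] c_def[symmetric]
    using L le2 key by simp
qed

end
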